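(* Let $A,B\subseteq\mathbb{N}$ with $A\cap B=\emptyset$ such that $\lim_{n\to\infty}\frac{B(n)-A(n)}{n}$ exists and is $>0$. Then there is a subset $D\subseteq B$ with $\lim_{n\to\infty}\frac{D(n)-A(n)}{n}=0$. In particular, $B\setminus D\in\mathcal{D}$.
   Context: $\mathbb{N}=\{1,2,3,\dots\}$. For $A\subseteq\mathbb{N}$ let $A(n)=|A\cap[1,n]|$. Let $\mathcal{D}$ be the collection of all $A\subseteq\mathbb{N}$ for which the asymptotic density $d(A)=\lim_{n\to\infty}\frac{A(n)}{n}$ exists. *)

theory Defs
  imports "HOL-Analysis.Analysis"
begin

definition cnt :: "nat set \<Rightarrow> nat \<Rightarrow> real" where
  "cnt A n = real (card (A \<inter> {1..n}))"

definition has_density :: "nat set \<Rightarrow> bool" where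
  "has_density A \<longleftrightarrow> (\<exists>d. (\<lambda>n. cnt A n / real n) \<longlonglongrightarrow> d)"

end

theory Submission
  imports Defs
begin

fun dd :: "nat set \<Rightarrow> nat set \<Rightarrow> nat \<Rightarrow> nat" where
  "dd A B 0 = 0"
| "dd A B (Suc n) = (if Suc n \<in> B \<and> dd A B n < card (A \<inter> {1..Suc n})
                      then Suc (dd A B n) else dd A B n)"

definition DD :: "nat set \<Rightarrow> nat set \<Rightarrow> nat set" where
  "DD A B = {k. \<exists>n. k = Suc n \<and> Suc n \<in> B \<and> dd A B n < card (A \<inter> {1..Suc n})}"

lemma card_step:
  "card (S \<inter> {1..Suc n}) = card (S \<inter> {1..n}) + (if Suc n \<in> S then 1 else 0)"
proof -
  have "S \<inter> {1..Suc n} = (if Suc n \<in> S then insert (Suc n) (S \<inter> {1..n}) else S \<inter> {1..n})"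
    by (auto simp: le_Suc_eq)
  then show ?thesis by auto
qed

lemma card_le: "card (S \<inter> {1..n}) \<le> n"
proof -
  have "card (S \<inter> {1..n}) \<le> card {1..n}" by (rule card_mono) auto
  then show ?thesis by simp
qed

lemma cardD: "card (DD A B \<inter> {1..n}) = dd A B n"
proof (induction n)
  case 0 then show ?case by simp
next
  case (Suc n)
  have "Suc n \<in> DD A B \<longleftrightarrow> Suc n \<in> B \<and> dd A B n < card (A \<inter> {1..Suc n})"
    unfolding DD_def by auto
  then show ?case using Suc card_step[of "DD A B" n] by auto
qed

lemma DD_sub: "DD A B \<subseteq> B" unfolding DD_def by auto

lemma dd_le: "dd A B n \<le> card (A \<inter> {1..n})"
proof (induction n)
  case 0 then show ?case by simp
next
  case (Suc n)
  then show ?case using card_step[of A n] by auto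
qed

lemma dd_ge:
  assumes "A \<inter> B = {}"
  shows "\<exists>m\<le>n. int (dd A B n) - int (card (A \<inter> {1..n})) \<ge>
     (int (card (B \<inter> {1..n})) - int (card (A \<inter> {1..n})))
   - (int (card (B \<inter> {1..m})) - int (card (A \<inter> {1..m})))"
proof (induction n)
  case 0 then show ?case by simp
next
  case (Suc n)
  then obtain m where m: "m \<le> n" "int (dd A B n) - int (card (A \<inter> {1..n})) \<ge>
     (int (card (B \<inter> {1..n})) - int (card (A \<inter> {1..n})))
   - (int (card (B \<inter> {1..m})) - int (card (A \<inter> {1..m})))" by blast
  note sA = card_step[of A n] and sB = card_step[of B n]
  show ?case
  proof (cases "Suc n \<in> B")
    case True
    then have nA: "Suc n \<notin> A" using assms by auto
    show ?thesis
    proof (cases "dd A B n < card (A \<inter> {1..Suc n})")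
      case True
      then show ?thesis using m nA `Suc n \<in> B` sA sB
        by (intro exI[of _ m]) auto
    next
      case False
      then show ?thesis using nA `Suc n \<in> B` sA sB
        by (intro exI[of _ "Suc n"]) auto
    qed
  next
    case False
    then show ?thesis using m sA sB
      by (intro exI[of _ m]) auto
  qed
qed

theorem lemma3p5:
  fixes A B :: "nat set"
  assumes "A \<subseteq> {1..}" and "B \<subseteq> {1..}"
    and "A \<inter> B = {}"
    and "\<exists>c>0. (\<lambda>n. (cnt B n - cnt A n) / real n) \<longlonglongrightarrow> c"
  shows "\<exists>D. D \<subseteq> B \<and> (\<lambda>n. (cnt D n - cnt A n) / real n) \<longlonglongrightarrow> 0
             \<and> has_density (B - D)"
proof -
  obtain c where c: "c > 0" "(\<lambda>n. (cnt B n - cnt A n) / real n) \<longlonglongrightarrow> c"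
    using assms(4) by blast
  define D where "D = DD A B"
  define g where "g n = cnt B n - cnt A n" for n
  define f where "f n = cnt D n - cnt A n" for n
  have fup: "f n \<le> 0" for n
    using dd_le[of A B n] unfolding f_def cnt_def D_def cardD by simp
  have gle: "g m \<le> real m" for m
    using card_le[of B m] unfolding g_def cnt_def by simp
  have flow: "\<exists>m\<le>n. f n \<ge> g n - g m" for n
  proof -
    obtain m where "m \<le> n" "int (dd A B n) - int (card (A \<inter> {1..n})) \<ge>
     (int (card (B \<inter> {1..n})) - int (card (A \<inter> {1..n})))
   - (int (card (B \<inter> {1..m})) - int (card (A \<inter> {1..m})))"
      using dd_ge[OF assms(3)] by blast
    then show ?thesis unfolding f_def g_def cnt_def D_def cardD
      by (intro exI[of _ m]) linarith
  qed
  have f0: "(\<lambda>n. f n / real n) \<longlonglongrightarrow> 0"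
  proof (rule LIMSEQ_I)
    fix r :: real assume r: "0 < r"
    define \<delta> where "\<delta> = r / 4"
    have "\<delta> > 0" using r by (simp add: \<delta>_def)
    from LIMSEQ_D[OF c(2)[folded g_def] this] obtain N where
      N: "\<And>n. n \<ge> N \<Longrightarrow> norm (g n / real n - c) < \<delta>" by blast
    have gub: "g m \<le> (c + \<delta>) * m + N" for m
    proof (cases "m \<ge> N")
      case True
      then have "g m / m < c + \<delta>" using N[of m] by auto
      show ?thesis
      proof (cases "m = 0")
        case False
        then have "m > 0" by simp
        with `g m / m < c + \<delta>` have "g m < (c + \<delta>) * m" by (simp add: field_simps)
        then show ?thesis by simp
      next
        case True then show ?thesis using gle[of 0] by simp
      qed
    next
      case False
      then have "g m \<le> N" using gle[of m] by simp
      moreover have "(c + \<delta>) * m \<ge> 0" using c(1) `\<delta> > 0` by simp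
      ultimately show ?thesis by simp
    qed
    obtain K :: nat where K: "real K > 2 * real N / r" using reals_Archimedean2 by blast
    show "\<exists>no. \<forall>n\<ge>no. norm (f n / real n - 0) < r"
    proof (intro exI[of _ "max (max N K) 1"] allI impI)
      fix n assume n: "max (max N K) 1 \<le> n"
      then have npos: "real n > 0" and nN: "n \<ge> N" and nK: "real n \<ge> K" by auto
      have "g n / n > c - \<delta>" using N[OF nN] by auto
      then have gn: "g n > (c - \<delta>) * n" using npos by (simp add: field_simps)
      obtain m where m: "m \<le> n" "f n \<ge> g n - g m" using flow by blast
      have "(c + \<delta>) * m \<le> (c + \<delta>) * n" using m(1) c(1) `\<delta> > 0`
        by (intro mult_left_mono) auto
      then have "f n \<ge> - 2 * \<delta> * n - N" using gub[of m] gn m(2)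
        by (simp add: algebra_simps)
      moreover have "N < r / 2 * n"
      proof -
        have "2 * real N / r < n" using K nK by linarith
        then show ?thesis using r by (simp add: field_simps)
      qed
      ultimately have "f n > - r * n" unfolding \<delta>_def by (simp add: algebra_simps)
      then have "f n / n > - r" using npos by (simp add: field_simps)
      moreover have "f n / n \<le> 0" using fup[of n] npos by (simp add: divide_le_0_iff)
      ultimately show "norm (f n / real n - 0) < r" using r by simp
    qed
  qed
  have "has_density (B - D)"
  proof -
    have "cnt (B - D) n / real n = g n / real n - f n / real n" for n
    proof -
      have "B \<inter> {1..n} - D \<inter> {1..n} = (B - D) \<inter> {1..n}" by auto
      moreover have "D \<inter> {1..n} \<subseteq> B \<inter> {1..n}" using DD_sub unfolding D_def by auto
      ultimately have "card ((B - D) \<inter> {1..n}) = card (B \<inter> {1..n}) - card (D \<inter> {1..n})"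
        by (metis card_Diff_subset finite_Int finite_atLeastAtMost)
      moreover have "card (D \<inter> {1..n}) \<le> card (B \<inter> {1..n})"
        using `D \<inter> {1..n} \<subseteq> B \<inter> {1..n}` by (intro card_mono) auto
      ultimately show ?thesis unfolding g_def f_def cnt_def by (simp add: diff_divide_distrib)
    qed
    moreover have "(\<lambda>n. g n / real n - f n / real n) \<longlonglongrightarrow> c - 0"
      using c(2)[folded g_def] f0 by (intro tendsto_diff)
    ultimately show ?thesis unfolding has_density_def by auto
  qed
  then show ?thesis using f0 DD_sub unfolding f_def D_def by blast
qed

end
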